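(* Let $\beta\in(-\infty,0)\cup(0,1]$, $G_\beta(u)=\frac{\beta}{|\beta|}u^\beta$, and $u_0\in\ell^\infty_+(\mathbb{Z})$ with $0<\delta\le u_0\le C$. Then there exists a solution $u:[0,\infty)\to\ell^\infty_+(\mathbb{Z})$ of $\partial_tu=\Delta G_\beta(u)$, $u(0)=u_0$, with $\delta\le u(t,\cdot)\le C$ for all $t\ge0$.
   Context: $\Delta v(k)=v(k-1)-2v(k)+v(k+1)$. A solution is a map $u\in C^0([0,\infty);\ell^\infty_+(\mathbb{Z}))$ with $u(0)=u_0$ such that for each $k$, $u(\cdot,k)\in C^1((0,\infty);(0,\infty))$ and $\frac{d}{dt}u(t,k)=\Delta G_\beta(u)(t,k)$ for all $t>0$. *)

theory Defs
  imports "HOL-Analysis.Analysis"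
begin

definition linfty_plus :: "(int \<Rightarrow> real) \<Rightarrow> bool" where
  "linfty_plus v \<longleftrightarrow> bounded (range v) \<and> (\<forall>k. 0 \<le> v k)"

definition Gbeta :: "real \<Rightarrow> real \<Rightarrow> real" where
  "Gbeta \<beta> x = (\<beta> / \<bar>\<beta>\<bar>) * x powr \<beta>"

definition dlap :: "(int \<Rightarrow> real) \<Rightarrow> int \<Rightarrow> real" where
  "dlap v k = v (k - 1) - 2 * v k + v (k + 1)"

definition is_solution :: "real \<Rightarrow> (int \<Rightarrow> real) \<Rightarrow> (real \<Rightarrow> int \<Rightarrow> real) \<Rightarrow> bool" where
  "is_solution \<beta> u0 u \<longleftrightarrow>
     (\<forall>t\<ge>0. linfty_plus (u t)) \<and>
     (\<forall>t0\<ge>0. \<forall>e>0. \<exists>d>0. \<forall>t\<ge>0. \<bar>t - t0\<bar> < d \<longrightarrow> (\<forall>k. \<bar>u t k - u t0 k\<bar> \<le> e)) \<and>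
     u 0 = u0 \<and>
     (\<forall>k. (\<forall>t>0. u t k > 0) \<and>
          (\<lambda>s. u s k) differentiable_on {0<..} \<and>
          continuous_on {0<..} (\<lambda>t. deriv (\<lambda>s. u s k) t) \<and>
          (\<forall>t>0. ((\<lambda>s. u s k) has_real_derivative dlap (\<lambda>j. Gbeta \<beta> (u t j)) k) (at t)))"

end

theory Submission
  imports Defs
begin

locale sol =
  fixes \<beta> \<delta> C :: real and u0 :: "int \<Rightarrow> real"
  assumes b0: "\<beta> \<noteq> 0" and b1: "\<beta> \<le> 1" and d0: "0 < \<delta>"
    and ub: "\<forall>k. \<delta> \<le> u0 k \<and> u0 k \<le> C"
begin

definition "L = \<bar>\<beta>\<bar> * \<delta> powr (\<beta> - 1)"
definition "M = 2 * L"
definition "Phi v k = dlap (\<lambda>j. Gbeta \<beta> (v j)) k + M * v k"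
definition "T v t k = exp (- M * t) * (u0 k + integral {0..t} (\<lambda>s. exp (M * s) * Phi (v s) k))"
definition "R = M * (C - \<delta>)"
definition "inX (v::real \<Rightarrow> int \<Rightarrow> real) \<longleftrightarrow> (\<forall>t\<ge>0. \<forall>k. \<delta> \<le> v t k \<and> v t k \<le> C) \<and>
   (\<forall>t\<ge>0. \<forall>t'\<ge>0. \<forall>k. \<bar>v t k - v t' k\<bar> \<le> R * \<bar>t - t'\<bar>)"

lemma L_pos: "L > 0" unfolding L_def using b0 d0 by simp
lemma M_pos: "M > 0" unfolding M_def using L_pos by simp
lemma dC: "\<delta> \<le> C" using ub by force
lemma R_nn: "R \<ge> 0" unfolding R_def using M_pos dC by simp

lemma G_deriv: "0 < x \<Longrightarrow> (Gbeta \<beta> has_real_derivative \<bar>\<beta>\<bar> * x powr (\<beta> - 1)) (at x)"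
proof -
  assume x: "0 < x"
  have "((\<lambda>x. (\<beta> / \<bar>\<beta>\<bar>) * x powr \<beta>) has_real_derivative (\<beta> / \<bar>\<beta>\<bar>) * (\<beta> * x powr (\<beta> - 1))) (at x)"
    by (intro DERIV_cmult has_real_derivative_powr x)
  moreover have "(\<beta> / \<bar>\<beta>\<bar>) * (\<beta> * x powr (\<beta> - 1)) = \<bar>\<beta>\<bar> * x powr (\<beta> - 1)"
    using b0 by (auto simp: abs_if field_simps)
  ultimately show ?thesis unfolding Gbeta_def[abs_def] by simp
qed

lemma G_lip: assumes "\<delta> \<le> y" "y \<le> x"
  shows "0 \<le> Gbeta \<beta> x - Gbeta \<beta> y \<and> Gbeta \<beta> x - Gbeta \<beta> y \<le> L * (x - y)"
proof (cases "y = x")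
  case True then show ?thesis using L_pos by simp
next
  case False
  then have yx: "y < x" using assms by simp
  obtain z where z: "y < z" "z < x" "Gbeta \<beta> x - Gbeta \<beta> y = (x - y) * (\<bar>\<beta>\<bar> * z powr (\<beta> - 1))"
    using MVT2[OF yx, of "Gbeta \<beta>" "\<lambda>z. \<bar>\<beta>\<bar> * z powr (\<beta> - 1)"] G_deriv assms d0 by force
  have "z powr (\<beta> - 1) \<le> \<delta> powr (\<beta> - 1)"
    using powr_mono2'[of "\<beta> - 1" \<delta> z] b1 d0 z assms by simp
  then have "\<bar>\<beta>\<bar> * z powr (\<beta> - 1) \<le> L" unfolding L_def by (simp add: mult_left_mono)
  moreover have "0 \<le> \<bar>\<beta>\<bar> * z powr (\<beta> - 1)" by simp
  ultimately show ?thesis using z yx by (simp add: mult_left_mono mult.commute)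
qed

lemma G_abs: "\<delta> \<le> a \<Longrightarrow> \<delta> \<le> c \<Longrightarrow> \<bar>Gbeta \<beta> a - Gbeta \<beta> c\<bar> \<le> L * \<bar>a - c\<bar>"
  using G_lip[of a c] G_lip[of c a] by (cases "a \<le> c") (auto simp: abs_if algebra_simps)

lemma h_abs: "\<delta> \<le> a \<Longrightarrow> \<delta> \<le> c \<Longrightarrow>
   \<bar>(M * a - 2 * Gbeta \<beta> a) - (M * c - 2 * Gbeta \<beta> c)\<bar> \<le> M * \<bar>a - c\<bar>"
  using G_lip[of a c] G_lip[of c a] unfolding M_def by (cases "a \<le> c") (auto simp: abs_if algebra_simps)

lemma Phi_eq: "Phi v k = Gbeta \<beta> (v (k - 1)) + Gbeta \<beta> (v (k + 1)) + (M * v k - 2 * Gbeta \<beta> (v k))"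
  unfolding Phi_def dlap_def by simp

lemma Phi_bounds: assumes "\<forall>j. \<delta> \<le> v j \<and> v j \<le> C"
  shows "M * \<delta> \<le> Phi v k \<and> Phi v k \<le> M * C"
proof -
  have g: "Gbeta \<beta> \<delta> \<le> Gbeta \<beta> (v j) \<and> Gbeta \<beta> (v j) \<le> Gbeta \<beta> C" for j
    using G_lip[of \<delta> "v j"] G_lip[of "v j" C] assms by auto
  have h1: "M * \<delta> - 2 * Gbeta \<beta> \<delta> \<le> M * v k - 2 * Gbeta \<beta> (v k)"
    using G_lip[of \<delta> "v k"] assms unfolding M_def by (auto simp: algebra_simps)
  have h2: "M * v k - 2 * Gbeta \<beta> (v k) \<le> M * C - 2 * Gbeta \<beta> C"
    using G_lip[of "v k" C] assms unfolding M_def by (auto simp: algebra_simps)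
  show ?thesis unfolding Phi_eq using g[of "k-1"] g[of "k+1"] h1 h2 by linarith
qed

lemma Phi_lip: assumes "\<forall>j. \<delta> \<le> v j" "\<forall>j. \<delta> \<le> w j" "\<forall>j. \<bar>v j - w j\<bar> \<le> b"
  shows "\<bar>Phi v k - Phi w k\<bar> \<le> 4 * L * b"
proof -
  have g: "\<bar>Gbeta \<beta> (v j) - Gbeta \<beta> (w j)\<bar> \<le> L * b" for j
    using G_abs[of "v j" "w j"] assms L_pos by (meson order_trans mult_left_mono less_imp_le)
  have h: "\<bar>(M * v k - 2 * Gbeta \<beta> (v k)) - (M * w k - 2 * Gbeta \<beta> (w k))\<bar> \<le> M * b"
    using h_abs[of "v k" "w k"] assms M_pos by (meson order_trans mult_left_mono less_imp_le)
  show ?thesis unfolding Phi_eq using g[of "k-1"] g[of "k+1"] h unfolding M_def by (simp add: abs_if split: if_splits; linarith)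
qed

lemma G_cont: "continuous_on {0<..} (Gbeta \<beta>)"
  by (intro continuous_at_imp_continuous_on ballI) (auto intro: DERIV_isCont G_deriv)

lemma inX_cont: "inX v \<Longrightarrow> continuous_on {0..} (\<lambda>s. v s j)"
  by (rule lipschitz_on_continuous_on[of R]) (auto simp: inX_def lipschitz_on_def dist_real_def R_nn)

lemma inX_pos: "inX v \<Longrightarrow> t \<ge> 0 \<Longrightarrow> \<delta> \<le> v t j" by (auto simp: inX_def)

lemma Phi_cont: assumes "inX v" shows "continuous_on {0..} (\<lambda>s. Phi (v s) k)"
proof -
  have c: "continuous_on {0..} (\<lambda>s. Gbeta \<beta> (v s j))" for j
    by (rule continuous_on_compose2[OF G_cont inX_cont[OF assms]]) (auto intro!: less_le_trans[OF d0] inX_pos[OF assms])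
  show ?thesis unfolding Phi_eq
    by (intro continuous_intros c inX_cont[OF assms])
qed

lemma f_cont: "inX v \<Longrightarrow> continuous_on {0..t} (\<lambda>s. exp (M * s) * Phi (v s) k)"
  by (intro continuous_intros continuous_on_subset[OF Phi_cont]) auto

lemma f_int: "inX v \<Longrightarrow> (\<lambda>s. exp (M * s) * Phi (v s) k) integrable_on {0..t}"
  by (rule integrable_continuous_interval[OF f_cont])

lemma exp_int: fixes a c t :: real assumes "t \<ge> 0" "a \<noteq> 0"
  shows "((\<lambda>s. c * exp (a * s)) has_integral (c / a * (exp (a * t) - 1))) {0..t}"
proof -
  have "((\<lambda>s. c * exp (a * s)) has_integral ((\<lambda>s. c / a * exp (a * s)) t - (\<lambda>s. c / a * exp (a * s)) 0)) {0..t}"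
  proof (rule fundamental_theorem_of_calculus[where f="\<lambda>s. c / a * exp (a * s)"])
    show "0 \<le> t" using assms by simp
    fix x :: real
    have "((\<lambda>s. c / a * exp (a * s)) has_real_derivative c / a * (exp (a * x) * a)) (at x within {0..t})"
      by (intro derivative_eq_intros) auto
    then show "((\<lambda>s. c / a * exp (a * s)) has_vector_derivative c * exp (a * x)) (at x within {0..t})"
      using assms by (simp add: has_real_derivative_iff_has_vector_derivative[symmetric])
  qed
  then show ?thesis by (simp add: algebra_simps)
qed

lemma T0: "T v 0 k = u0 k" unfolding T_def by simp

lemma T_bounds: assumes "inX v" "t \<ge> 0"
  shows "\<delta> \<le> T v t k \<and> T v t k \<le> C"
proof -
  let ?f = "\<lambda>s. exp (M * s) * Phi (v s) k"
  have i: "(?f has_integral integral {0..t} ?f) {0..t}" using f_int[OF assms(1)] by blast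
  have lo: "\<delta> * (exp (M * t) - 1) \<le> integral {0..t} ?f"
  proof -
    have "M * \<delta> / M * (exp (M * t) - 1) \<le> integral {0..t} ?f"
      apply (rule has_integral_le[OF exp_int[of t M "M * \<delta>"] i])
      using assms M_pos Phi_bounds[of "v _" k] by (auto simp: inX_def)
    then show ?thesis using M_pos by simp
  qed
  have hi: "integral {0..t} ?f \<le> C * (exp (M * t) - 1)"
  proof -
    have "integral {0..t} ?f \<le> M * C / M * (exp (M * t) - 1)"
      apply (rule has_integral_le[OF i exp_int[of t M "M * C"]])
      using assms M_pos Phi_bounds[of "v _" k] by (auto simp: inX_def)
    then show ?thesis using M_pos by simp
  qed
  have e: "exp (- M * t) * exp (M * t) = 1" by (simp add: exp_add[symmetric])
  have u: "\<delta> \<le> u0 k" "u0 k \<le> C" using ub by auto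
  have "\<delta> = exp (- M * t) * (\<delta> + \<delta> * (exp (M * t) - 1))" using e by (simp add: algebra_simps)
  also have "\<dots> \<le> T v t k" unfolding T_def using lo u by (intro mult_left_mono) auto
  finally have 1: "\<delta> \<le> T v t k" .
  have "T v t k \<le> exp (- M * t) * (C + C * (exp (M * t) - 1))" unfolding T_def using hi u by (intro mult_left_mono) auto
  also have "\<dots> = C" using e by (simp add: algebra_simps)
  finally show ?thesis using 1 by simp
qed


lemma T_deriv: assumes "inX v" "t > 0"
  shows "((\<lambda>s. T v s k) has_real_derivative (- M * T v t k + Phi (v t) k)) (at t)"
proof -
  define f where "f = (\<lambda>s. exp (M * s) * Phi (v s) k)"
  have "((\<lambda>u. integral {0..u} f) has_vector_derivative f t) (at t within {0..t+1})"
    unfolding f_def by (rule integral_has_vector_derivative[OF f_cont[OF assms(1)]]) (use assms in auto)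
  then have "((\<lambda>u. integral {0..u} f) has_vector_derivative f t) (at t within {0<..<t+1})"
    by (rule has_vector_derivative_within_subset) auto
  then have "((\<lambda>u. integral {0..u} f) has_vector_derivative f t) (at t)"
  proof -
    have o: "t \<in> {0<..<t+1}" using assms by simp
    show ?thesis using has_vector_derivative_within_open[OF o open_greaterThanLessThan] \<open>((\<lambda>u. integral {0..u} f) has_vector_derivative f t) (at t within {0<..<t+1})\<close> by blast
  qed
  then have I: "((\<lambda>u. integral {0..u} f) has_real_derivative f t) (at t)"
    by (rule has_real_derivative_iff_has_vector_derivative[THEN iffD2])
  have E: "((\<lambda>s. exp (- M * s)) has_real_derivative exp (- M * t) * (- M)) (at t)"
    by (auto intro!: derivative_eq_intros)
  have D: "((\<lambda>s. exp (- M * s) * (u0 k + integral {0..s} f)) has_real_derivative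
     (exp (- M * t) * (- M)) * (u0 k + integral {0..t} f) + (0 + f t) * exp (- M * t)) (at t)"
    by (intro DERIV_mult E DERIV_add DERIV_const I)
  have e: "exp (- M * t) * exp (M * t) = 1" by (simp add: exp_add[symmetric])
  have e2: "(0 + f t) * exp (- M * t) = Phi (v t) k"
    unfolding f_def using e by (simp add: mult.commute mult.left_commute)
  have Tt: "T v t k = exp (- M * t) * (u0 k + integral {0..t} f)" unfolding T_def f_def ..
  have "(exp (- M * t) * (- M)) * (u0 k + integral {0..t} f) + (0 + f t) * exp (- M * t)
      = - M * T v t k + Phi (v t) k"
    unfolding e2 Tt by simp
  moreover have "(\<lambda>s. T v s k) = (\<lambda>s. exp (- M * s) * (u0 k + integral {0..s} f))"
    unfolding T_def f_def ..
  ultimately show ?thesis using D by simp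
qed

lemma T_cont: assumes "inX v" "0 \<le> a" shows "continuous_on {a..b} (\<lambda>s. T v s k)"
proof -
  have "continuous_on {0..b} (\<lambda>x. integral {0..x} (\<lambda>s. exp (M * s) * Phi (v s) k))"
    by (rule indefinite_integral_continuous_1[OF f_int[OF assms(1)]])
  then have "continuous_on {a..b} (\<lambda>x. integral {0..x} (\<lambda>s. exp (M * s) * Phi (v s) k))"
    by (rule continuous_on_subset) (use assms in auto)
  then show ?thesis unfolding T_def by (intro continuous_intros)
qed

lemma T_lip1: assumes "inX v" "0 \<le> a" "a < b"
  shows "\<bar>T v b k - T v a k\<bar> \<le> R * (b - a)"
proof -
  obtain l z where z: "a < z" "z < b" "((\<lambda>s. T v s k) has_real_derivative l) (at z)"
    "T v b k - T v a k = (b - a) * l"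
  proof -
    have "(\<lambda>s. T v s k) differentiable (at x)" if "a < x" "x < b" for x
    proof -
      have "x > 0" using that assms by simp
      then show ?thesis using T_deriv[OF assms(1)] real_differentiable_def by blast
    qed
    then show ?thesis using MVT[OF assms(3) T_cont[OF assms(1,2)], of k] that by blast
  qed
  have "l = - M * T v z k + Phi (v z) k"
    using DERIV_unique[OF z(3) T_deriv[OF assms(1)]] z assms by simp
  moreover have "\<delta> \<le> T v z k \<and> T v z k \<le> C" using T_bounds assms z by simp
  moreover have "M * \<delta> \<le> Phi (v z) k \<and> Phi (v z) k \<le> M * C"
    using Phi_bounds[of "v z" k] assms z by (auto simp: inX_def)
  moreover have "M * \<delta> \<le> M * T v z k" "M * T v z k \<le> M * C"
    using calculation(2) M_pos by (auto intro: mult_left_mono)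
  ultimately have "\<bar>l\<bar> \<le> R" unfolding R_def by (simp add: right_diff_distrib abs_le_iff)
  then show ?thesis using z assms by (simp add: abs_mult mult.commute mult_right_mono)
qed

lemma T_inX: assumes "inX v" shows "inX (T v)"
proof -
  have "\<bar>T v t k - T v t' k\<bar> \<le> R * \<bar>t - t'\<bar>" if "t \<ge> 0" "t' \<ge> 0" for t t' k
  proof -
    consider "t < t'" | "t = t'" | "t' < t" by linarith
    then show ?thesis
    proof cases
      case 1 then show ?thesis using T_lip1[OF assms that(1) 1, of k] by (simp add: abs_minus_commute)
    next
      case 2 then show ?thesis by simp
    next
      case 3 then show ?thesis using T_lip1[OF assms that(2) 3, of k] by simp
    qed
  qed
  then show ?thesis using T_bounds[OF assms] unfolding inX_def by blast
qed

definition "lam = 4 * L"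

lemma T_diff: assumes "inX v" "inX w" "t \<ge> 0" "b \<ge> 0"
  and bd: "\<forall>s\<in>{0..t}. \<forall>j. \<bar>v s j - w s j\<bar> \<le> b * exp (lam * s)"
  shows "\<bar>T v t k - T w t k\<bar> \<le> (2/3) * b * exp (lam * t)"
proof -
  let ?f = "\<lambda>s. exp (M * s) * Phi (v s) k" and ?g = "\<lambda>s. exp (M * s) * Phi (w s) k"
  have bnd: "norm (?f s - ?g s) \<le> 4 * L * b * exp ((6 * L) * s)" if s: "s \<in> {0..t}" for s
  proof -
    have "\<bar>Phi (v s) k - Phi (w s) k\<bar> \<le> 4 * L * (b * exp (lam * s))"
      by (rule Phi_lip) (use bd s assms(1,2) in \<open>auto simp: inX_def\<close>)
    then have "exp (M * s) * \<bar>Phi (v s) k - Phi (w s) k\<bar> \<le> exp (M * s) * (4 * L * (b * exp (lam * s)))"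
      by (simp add: mult_left_mono)
    also have "\<dots> = 4 * L * b * exp ((6 * L) * s)"
      unfolding M_def lam_def by (simp add: exp_add[symmetric] algebra_simps)
    finally have "exp (M * s) * \<bar>Phi (v s) k - Phi (w s) k\<bar> \<le> 4 * L * b * exp ((6 * L) * s)" .
    moreover have "?f s - ?g s = exp (M * s) * (Phi (v s) k - Phi (w s) k)" by (simp add: right_diff_distrib)
    ultimately show ?thesis by (simp add: abs_mult)
  qed
  have ei: "((\<lambda>s. 4 * L * b * exp ((6 * L) * s)) has_integral
       (4 * L * b / (6 * L) * (exp ((6 * L) * t) - 1))) {0..t}"
    by (rule exp_int) (use assms L_pos in auto)
  have "norm (integral {0..t} (\<lambda>s. ?f s - ?g s)) \<le> integral {0..t} (\<lambda>s. 4 * L * b * exp ((6 * L) * s))"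
    by (rule integral_norm_bound_integral)
      (use bnd ei f_int[OF assms(1)] f_int[OF assms(2)] in \<open>auto intro: integrable_diff\<close>)
  also have "\<dots> = 4 * L * b / (6 * L) * (exp ((6 * L) * t) - 1)" using ei by (rule integral_unique)
  also have "\<dots> = (2/3) * b * (exp ((6 * L) * t) - 1)" using L_pos by simp
  finally have i: "\<bar>integral {0..t} ?f - integral {0..t} ?g\<bar> \<le> (2/3) * b * (exp ((6 * L) * t) - 1)"
    using integral_diff[OF f_int[OF assms(1)] f_int[OF assms(2)]] by simp
  have "T v t k - T w t k = exp (- M * t) * (integral {0..t} ?f - integral {0..t} ?g)"
    unfolding T_def by (simp add: algebra_simps)
  then have "\<bar>T v t k - T w t k\<bar> = exp (- M * t) * \<bar>integral {0..t} ?f - integral {0..t} ?g\<bar>"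
    by (simp add: abs_mult)
  also have "\<dots> \<le> exp (- M * t) * ((2/3) * b * (exp ((6 * L) * t) - 1))"
    using i by (simp add: mult_left_mono)
  also have "\<dots> \<le> exp (- M * t) * ((2/3) * b * exp ((6 * L) * t))"
    using assms by (intro mult_left_mono) auto
  also have "\<dots> = (2/3) * b * exp (lam * t)"
    unfolding M_def lam_def by (simp add: exp_add[symmetric] algebra_simps)
  finally show ?thesis .
qed

definition "it n = (T ^^ n) (\<lambda>t. u0)"
definition "B = C - \<delta>"
definition "usol t k = u0 k + (\<Sum>i. it (Suc i) t k - it i t k)"

lemma it_Suc: "it (Suc n) = T (it n)" by (simp add: it_def)
lemma it_zero: "it 0 = (\<lambda>t. u0)" by (simp add: it_def)

lemma it_inX: "inX (it n)"
proof (induction n)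
  case 0 show ?case unfolding it_zero inX_def using ub R_nn by auto
next
  case (Suc n) then show ?case unfolding it_Suc by (rule T_inX)
qed

lemma it_at0: "it n 0 k = u0 k"
  by (cases n) (auto simp: it_zero it_Suc T0)

lemma lam_nn: "lam \<ge> 0" unfolding lam_def using L_pos by simp
lemma B_nn: "B \<ge> 0" unfolding B_def using dC by simp

lemma it_diff: "t \<ge> 0 \<Longrightarrow> \<bar>it (Suc n) t k - it n t k\<bar> \<le> B * (2/3)^n * exp (lam * t)"
proof (induction n arbitrary: t k)
  case 0
  have "\<delta> \<le> it (Suc 0) t k \<and> it (Suc 0) t k \<le> C" "\<delta> \<le> it 0 t k \<and> it 0 t k \<le> C"
    using it_inX 0 unfolding inX_def by blast+
  then have "\<bar>it (Suc 0) t k - it 0 t k\<bar> \<le> B * 1" unfolding B_def by auto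
  also have "\<dots> \<le> B * exp (lam * t)" using B_nn lam_nn 0 by (intro mult_left_mono) auto
  finally show ?case by simp
next
  case (Suc n)
  have "\<bar>T (it (Suc n)) t k - T (it n) t k\<bar> \<le> (2/3) * (B * (2/3)^n) * exp (lam * t)"
    by (rule T_diff[OF it_inX it_inX Suc.prems]) (use B_nn Suc.IH in auto)
  then show ?case unfolding it_Suc[of "Suc n"] it_Suc[of n] by (simp add: algebra_simps)
qed

lemma small: fixes y A :: real assumes "\<forall>n. y \<le> A * (2/3)^n" shows "y \<le> 0"
proof -
  have "(\<lambda>n. A * (2/3::real)^n) \<longlonglongrightarrow> 0" by (intro tendsto_mult_right_zero LIMSEQ_power_zero) simp
  then show ?thesis by (rule LIMSEQ_le_const) (use assms in auto)
qed

lemma tail: assumes "t \<ge> 0" shows "\<bar>usol t k - it n t k\<bar> \<le> 3 * B * exp (lam * t) * (2/3)^n"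
proof -
  define d where "d i = it (Suc i) t k - it i t k" for i
  define c where "c = B * exp (lam * t)"
  have db: "\<bar>d i\<bar> \<le> c * (2/3)^i" for i unfolding d_def c_def using it_diff[OF assms] by (simp add: algebra_simps)
  have sg: "summable (\<lambda>i. c * (2/3::real)^i)" by (intro summable_mult summable_geometric) simp
  have sd: "summable d" by (rule summable_comparison_test'[OF sg]) (use db in simp)
  have tel: "it n t k = u0 k + sum d {..<n}"
    using sum_lessThan_telescope[of "\<lambda>i. it i t k" n] unfolding d_def it_zero by simp
  have "usol t k = u0 k + suminf d" unfolding usol_def d_def ..
  then have eq: "usol t k - it n t k = (\<Sum>i. d (i + n))" using suminf_split_initial_segment[OF sd, of n] tel by simp
  have sg2: "summable (\<lambda>i. c * (2/3)^n * (2/3::real)^i)" by (intro summable_mult summable_geometric) simp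
  have "norm (\<Sum>i. d (i + n)) \<le> (\<Sum>i. c * (2/3)^n * (2/3::real)^i)"
  proof (rule norm_suminf_le[OF _ sg2])
    fix i show "norm (d (i + n)) \<le> c * (2/3)^n * (2/3)^i" using db[of "i+n"] by (simp add: power_add algebra_simps)
  qed
  also have "\<dots> = c * (2/3)^n * 3"
    by (subst suminf_mult) (use summable_geometric[of "2/3::real"] suminf_geometric[of "2/3::real"] in auto)
  finally show ?thesis using eq unfolding c_def by (simp add: algebra_simps)
qed

lemma u_inX: "inX usol"
proof -
  have bd: "\<delta> \<le> usol t k \<and> usol t k \<le> C" if t: "t \<ge> 0" for t k
  proof -
    have "\<delta> - usol t k \<le> 0"
    proof (rule small[of _ "3 * B * exp (lam * t)"], rule allI)
      fix n
      have "\<delta> \<le> it n t k" using it_inX t unfolding inX_def by blast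
      then show "\<delta> - usol t k \<le> 3 * B * exp (lam * t) * (2/3)^n" using tail[OF t, of k n] by linarith
    qed
    moreover have "usol t k - C \<le> 0"
    proof (rule small[of _ "3 * B * exp (lam * t)"], rule allI)
      fix n
      have "it n t k \<le> C" using it_inX t unfolding inX_def by blast
      then show "usol t k - C \<le> 3 * B * exp (lam * t) * (2/3)^n" using tail[OF t, of k n] by linarith
    qed
    ultimately show ?thesis by simp
  qed
  have lp: "\<bar>usol t k - usol t' k\<bar> \<le> R * \<bar>t - t'\<bar>" if t: "t \<ge> 0" "t' \<ge> 0" for t t' k
  proof -
    have "\<bar>usol t k - usol t' k\<bar> - R * \<bar>t - t'\<bar> \<le> 0"
    proof (rule small[of _ "3 * B * exp (lam * t) + 3 * B * exp (lam * t')"], rule allI)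
      fix n
      have "\<bar>it n t k - it n t' k\<bar> \<le> R * \<bar>t - t'\<bar>" using it_inX t unfolding inX_def by blast
      then show "\<bar>usol t k - usol t' k\<bar> - R * \<bar>t - t'\<bar> \<le> (3 * B * exp (lam * t) + 3 * B * exp (lam * t')) * (2/3)^n"
        using tail[OF t(1), of k n] tail[OF t(2), of k n] by (simp add: algebra_simps abs_le_iff; linarith)
    qed
    then show ?thesis by simp
  qed
  show ?thesis unfolding inX_def using bd lp by blast
qed

lemma u_fix: assumes "t \<ge> 0" shows "T usol t k = usol t k"
proof -
  have "\<bar>T usol t k - usol t k\<bar> \<le> 0"
  proof (rule small[of _ "4 * B * exp (lam * t)"], rule allI)
    fix n
    have "\<bar>T usol t k - T (it n) t k\<bar> \<le> (2/3) * (3 * B * (2/3)^n) * exp (lam * t)"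
    proof (rule T_diff[OF u_inX it_inX assms])
      show "0 \<le> 3 * B * (2/3)^n" using B_nn by simp
      show "\<forall>s\<in>{0..t}. \<forall>j. \<bar>usol s j - it n s j\<bar> \<le> 3 * B * (2/3)^n * exp (lam * s)"
        using tail by (simp add: algebra_simps)
    qed
    moreover have "\<bar>usol t k - it (Suc n) t k\<bar> \<le> 3 * B * exp (lam * t) * (2/3)^(Suc n)" by (rule tail[OF assms])
    ultimately show "\<bar>T usol t k - usol t k\<bar> \<le> 4 * B * exp (lam * t) * (2/3)^n"
      unfolding it_Suc by (simp add: algebra_simps abs_le_iff; linarith)
  qed
  then show ?thesis by simp
qed

lemma u_at0: "usol 0 = u0"
  by (rule ext) (simp add: usol_def it_at0)

lemma u_deriv: assumes "t > 0"
  shows "((\<lambda>s. usol s k) has_real_derivative dlap (\<lambda>j. Gbeta \<beta> (usol t j)) k) (at t)"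
proof -
  have "((\<lambda>s. usol s k) has_real_derivative (- M * T usol t k + Phi (usol t) k)) (at t)"
    by (rule has_field_derivative_transform_within_open[OF T_deriv[OF u_inX assms] open_greaterThan, of 0])
       (use assms u_fix in auto)
  moreover have "- M * T usol t k + Phi (usol t) k = dlap (\<lambda>j. Gbeta \<beta> (usol t j)) k"
    using u_fix[of t k] assms unfolding Phi_def by simp
  ultimately show ?thesis by simp
qed

lemma u_dcont: "continuous_on {0<..} (\<lambda>t. dlap (\<lambda>j. Gbeta \<beta> (usol t j)) k)"
proof -
  have "continuous_on {0..} (\<lambda>t. Phi (usol t) k - M * usol t k)"
    by (intro continuous_intros Phi_cont[OF u_inX] inX_cont[OF u_inX])
  then have "continuous_on {0<..} (\<lambda>t. Phi (usol t) k - M * usol t k)"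
    by (rule continuous_on_subset) auto
  moreover have "Phi (usol t) k - M * usol t k = dlap (\<lambda>j. Gbeta \<beta> (usol t j)) k" for t
    unfolding Phi_def by simp
  ultimately show ?thesis by simp
qed

end

theorem corollaryA5:
  fixes \<beta> \<delta> C :: real and u0 :: "int \<Rightarrow> real"
  assumes "\<beta> \<noteq> 0" and "\<beta> \<le> 1"
    and "linfty_plus u0"
    and "0 < \<delta>" and "\<forall>k. \<delta> \<le> u0 k \<and> u0 k \<le> C"
  shows "\<exists>u. is_solution \<beta> u0 u \<and> (\<forall>t\<ge>0. \<forall>k. \<delta> \<le> u t k \<and> u t k \<le> C)"
proof -
  interpret S: sol \<beta> \<delta> C u0 using assms by unfold_locales auto
  let ?u = "S.usol"
  have bd: "\<forall>t\<ge>0. \<forall>k. \<delta> \<le> ?u t k \<and> ?u t k \<le> C" using S.u_inX unfolding S.inX_def by blast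
  have lp: "\<forall>t\<ge>0. \<forall>t'\<ge>0. \<forall>k. \<bar>?u t k - ?u t' k\<bar> \<le> S.R * \<bar>t - t'\<bar>" using S.u_inX unfolding S.inX_def by blast
  have c1: "\<forall>t\<ge>0. linfty_plus (?u t)"
  proof (intro allI impI)
    fix t :: real assume t: "t \<ge> 0"
    have "\<bar>?u t k\<bar> \<le> C" for k proof -
      have "\<delta> \<le> ?u t k" "?u t k \<le> C" using bd t by auto
      then show ?thesis using assms(4) by linarith
    qed
    then have "\<forall>x\<in>range (?u t). \<bar>x\<bar> \<le> C" by blast
    then show "linfty_plus (?u t)" unfolding linfty_plus_def bounded_real using bd t assms(4)
      by (meson less_le_trans less_imp_le)
  qed
  have c2: "\<forall>t0\<ge>0. \<forall>e>0. \<exists>d>0. \<forall>t\<ge>0. \<bar>t - t0\<bar> < d \<longrightarrow> (\<forall>k. \<bar>?u t k - ?u t0 k\<bar> \<le> e)"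
  proof (intro allI impI)
    fix t0 e :: real assume t0: "t0 \<ge> 0" and e: "e > 0"
    have R: "S.R \<ge> 0" by (rule S.R_nn)
    show "\<exists>d>0. \<forall>t\<ge>0. \<bar>t - t0\<bar> < d \<longrightarrow> (\<forall>k. \<bar>?u t k - ?u t0 k\<bar> \<le> e)"
    proof (intro exI[of _ "e / (S.R + 1)"] conjI allI impI)
      show "e / (S.R + 1) > 0" using e R by simp
      fix t k assume t: "t \<ge> 0" and d: "\<bar>t - t0\<bar> < e / (S.R + 1)"
      have "\<bar>?u t k - ?u t0 k\<bar> \<le> S.R * \<bar>t - t0\<bar>" using lp t t0 by blast
      also have "\<dots> \<le> S.R * (e / (S.R + 1))" using d R by (intro mult_left_mono) auto
      also have "\<dots> \<le> e" using R e by (simp add: field_simps)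
      finally show "\<bar>?u t k - ?u t0 k\<bar> \<le> e" .
    qed
  qed
  have c4: "(\<forall>t>0. ?u t k > 0) \<and>
          (\<lambda>s. ?u s k) differentiable_on {0<..} \<and>
          continuous_on {0<..} (\<lambda>t. deriv (\<lambda>s. ?u s k) t) \<and>
          (\<forall>t>0. ((\<lambda>s. ?u s k) has_real_derivative dlap (\<lambda>j. Gbeta \<beta> (?u t j)) k) (at t))" for k
  proof (intro conjI allI impI)
    fix t :: real assume "t > 0" then show "?u t k > 0" using bd assms(4) by (meson less_imp_le less_le_trans)
  next
    show "(\<lambda>s. ?u s k) differentiable_on {0<..}"
      by (rule differentiable_at_imp_differentiable_on) (use S.u_deriv real_differentiable_def in auto)
  next
    have "continuous_on {0<..} (\<lambda>t. dlap (\<lambda>j. Gbeta \<beta> (?u t j)) k)" by (rule S.u_dcont)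
    then show "continuous_on {0<..} (\<lambda>t. deriv (\<lambda>s. ?u s k) t)"
      by (rule continuous_on_cong[THEN iffD1, rotated 2]) (auto intro!: sym[OF DERIV_imp_deriv] S.u_deriv)
  next
    fix t :: real assume "t > 0"
    then show "((\<lambda>s. ?u s k) has_real_derivative dlap (\<lambda>j. Gbeta \<beta> (?u t j)) k) (at t)" by (rule S.u_deriv)
  qed
  have "is_solution \<beta> u0 ?u" unfolding is_solution_def using c1 c2 c4 S.u_at0 by blast
  then show ?thesis using bd by blast
qed

end
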